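(* Let $k\ge2$ and $m\ge2$ be integers and put $n=m(k-1)$. Suppose $A(x)=\sum_{i=0}^{k-1}a_ix^i$ is a monic polynomial of degree $k-1$, $B$ is a polynomial, and $c\in\mathbb C$, $c\neq0$, are such that $$A(x)^m-c\,(x-1)=x^k B(x).$$ Then $A$ satisfies the differential equation $$m\,A'(x)\,(x-1)-A(x)=\big(m(k-1)-1\big)\,x^{k-1};$$ consequently its coefficients are given by $a_{k-1}=1$ and $a_i=\dfrac{m(i+1)}{mi-1}\,a_{i+1}$ for $0\le i\le k-2$. Moreover $c=-a_0^m$.
   Context: This is the normalization of the Davenport–Zannier pair $P=A^m$, $Q=x^kB$, $R=P-Q=c(x-1)$ for a weighted tree of diameter 4 (series $G$) whose central white vertex (at $0$) has degree $k$ and all black vertices have degree $m$. *)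

theory Defs
  imports "HOL-Computational_Algebra.Polynomial"
begin

end

theory Submission
  imports Defs
begin

lemma ringid:
  fixes A B pA pB A' X Xk L C M K :: "'a::comm_ring_1"
  assumes h: "A * A' = C * L + X * Xk * B"
    and d: "M * A' * pA = C + X * Xk * pB + K * (B * Xk)"
  shows "A' * (M * (pA * L) - A) = Xk * (X * pB * L + K * B * L - X*B)"
proof -
  have "A' * (M * (pA * L) - A) = (M * A' * pA) * L - A * A'"
    by (simp add: algebra_simps)
  also have "\<dots> = (C + X * Xk * pB + K * (B * Xk)) * L - (C * L + X * Xk * B)"
    using h d by simp
  also have "\<dots> = Xk * (X * pB * L + K * B * L - X*B)"
    by (simp add: algebra_simps)
  finally show ?thesis .
qed

lemma coeffD:
  fixes A :: "complex poly" and M :: complex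
  shows "coeff (smult M (pderiv A * [:-1, 1:]) - A) i =
     M * ((if i = 0 then 0 else of_nat i * coeff A i) - of_nat (Suc i) * coeff A (Suc i)) - coeff A i"
proof -
  have "pderiv A * [:-1, 1:] = pCons 0 (pderiv A) - pderiv A"
    by (simp add: mult_pCons_right)
  then show ?thesis
    by (cases i) (simp_all add: coeff_pderiv algebra_simps)
qed

theorem mainTheorem6:
  fixes k m :: nat and A B :: "complex poly" and c :: complex
  assumes "k \<ge> 2" and "m \<ge> 2"
    and "degree A = k - 1" and "lead_coeff A = 1"
    and "c \<noteq> 0"
    and "A ^ m - smult c [:-1, 1:] = monom 1 k * B"
  shows "smult (of_nat m) (pderiv A * [:-1, 1:]) - A
           = monom (of_nat (m * (k - 1)) - 1) (k - 1)
       \<and> coeff A (k - 1) = 1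
       \<and> (\<forall>i. i \<le> k - 2 \<longrightarrow>
             coeff A i = of_nat (m * (i + 1)) / (of_nat (m * i) - 1) * coeff A (i + 1))
       \<and> c = - (coeff A 0 ^ m)"
proof -
  obtain m' where mm: "m = Suc m'" using assms(2) by (cases m) auto
  obtain k' where kk: "k = Suc k'" using assms(1) by (cases k) auto
  define X :: "complex poly" where "X = [:0,1:]"
  define L :: "complex poly" where "L = [:-1,1:]"
  define D where "D = smult (of_nat m) (pderiv A * [:-1, 1:]) - A"
  have mon: "monom 1 k = X * X ^ k'" unfolding X_def kk by (simp add: monom_altdef)
  have h0: "A ^ m = smult c L + monom 1 k * B" using assms(6) unfolding L_def
    by (simp add: algebra_simps)
  have h: "A * A ^ m' = [:c:] * L + X * X ^ k' * B" using h0 mon mm by simp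
  have "pderiv (A ^ m) = pderiv (smult c L) + pderiv (X ^ Suc k' * B)"
    using h0 mon by (simp add: pderiv_add)
  moreover have "pderiv (A ^ m) = smult (of_nat (Suc m')) (A ^ m') * pderiv A"
    unfolding mm by (rule pderiv_power_Suc)
  moreover have "pderiv (smult c L) = [:c:]" unfolding L_def
    by (simp add: pderiv_smult pderiv_pCons)
  moreover have "pderiv (X ^ Suc k' * B) = X ^ Suc k' * pderiv B + smult (of_nat (Suc k')) (B * X ^ k')"
    unfolding X_def using lemma_order_pderiv1[of 0 k' B] by simp
  ultimately have "smult (of_nat (Suc m')) (A ^ m') * pderiv A
      = [:c:] + X ^ Suc k' * pderiv B + smult (of_nat (Suc k')) (B * X ^ k')"
    by simp
  then have d: "[:of_nat (Suc m'):] * A ^ m' * pderiv A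
      = [:c:] + X * X ^ k' * pderiv B + [:of_nat (Suc k'):] * (B * X ^ k')"
    by simp
  have DD: "D = [:of_nat (Suc m'):] * (pderiv A * L) - A"
    unfolding D_def L_def mm by simp
  have key: "A ^ m' * D = X ^ k' * (X * pderiv B * L + [:of_nat (Suc k'):] * B * L - X * B)"
    unfolding DD by (rule ringid[OF h d])
  have A0: "poly A 0 ^ m = - c"
  proof -
    have "poly (A ^ m) 0 = poly (smult c L + monom 1 k * B) 0" using h0 by simp
    then show ?thesis unfolding L_def mon X_def by simp
  qed
  have pA0: "poly A 0 \<noteq> 0" using A0 assms(5) mm by auto
  have dvdD: "monom 1 k' dvd D"
  proof (cases "D = 0")
    case True then show ?thesis by simp
  next
    case False
    have Am: "A ^ m' \<noteq> 0" using pA0 by auto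
    have "monom 1 k' dvd A ^ m' * D" unfolding key X_def by (simp add: monom_altdef)
    then have "k' \<le> order 0 (A ^ m' * D)"
      using monom_1_dvd_iff[of "A ^ m' * D" k'] Am False by simp
    also have "\<dots> = order 0 (A ^ m') + order 0 D" using Am False by (simp add: order_mult)
    also have "poly (A ^ m') 0 \<noteq> 0" using pA0 by simp
    then have "order 0 (A ^ m') = 0" using order_root by blast
    finally show ?thesis using monom_1_dvd_iff[OF False] by simp
  qed
  have low: "\<And>i. i < k' \<Longrightarrow> coeff D i = 0" using dvdD monom_1_dvd_iff' by blast
  have hi: "\<And>i. i > k' \<Longrightarrow> coeff A i = 0"
    using assms(3) kk by (simp add: coeff_eq_0)
  have top: "coeff A k' = 1" using assms(3,4) kk by simp
  have cD: "\<And>i. coeff D i = of_nat m * ((if i = 0 then 0 else of_nat i * coeff A i)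
      - of_nat (Suc i) * coeff A (Suc i)) - coeff A i"
    unfolding D_def by (rule coeffD)
  have c1: "D = monom (of_nat (m * (k - 1)) - 1) (k - 1)"
  proof (rule poly_eqI)
    fix n
    show "coeff D n = coeff (monom (of_nat (m * (k - 1)) - 1) (k - 1)) n"
    proof (cases "n < k'")
      case True then show ?thesis using low kk by simp
    next
      case False
      show ?thesis
      proof (cases "n = k'")
        case True
        have "k' \<noteq> 0" using assms(1) kk by simp
        then show ?thesis using True cD[of k'] top hi[of "Suc k'"] kk by simp
      next
        case False2: False
        then have "n > k'" using False by simp
        then show ?thesis using cD[of n] hi[of n] hi[of "Suc n"] kk by simp
      qed
    qed
  qed
  have c3: "\<forall>i. i \<le> k - 2 \<longrightarrow>
             coeff A i = of_nat (m * (i + 1)) / (of_nat (m * i) - 1) * coeff A (i + 1)"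
  proof (intro allI impI)
    fix i assume "i \<le> k - 2"
    then have ik: "i < k'" using kk assms(1) by simp
    have z: "coeff D i = 0" using low ik by simp
    have ne: "(of_nat (m * i) :: complex) - 1 \<noteq> 0"
    proof
      assume "(of_nat (m * i) :: complex) - 1 = 0"
      then have "(of_nat (m * i) :: complex) = of_nat 1" by simp
      then have "m * i = 1" using of_nat_eq_iff by blast
      then show False using assms(2) by simp
    qed
    have eq: "coeff A i * (of_nat (m * i) - 1) = of_nat (m * (i + 1)) * coeff A (i + 1)"
      using z cD[of i] by (cases "i = 0") (auto simp: algebra_simps)
    show "coeff A i = of_nat (m * (i + 1)) / (of_nat (m * i) - 1) * coeff A (i + 1)"
      using eq ne by (simp add: field_simps)
  qed
  have c4: "c = - (coeff A 0 ^ m)" using A0 by (simp add: poly_0_coeff_0)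
  show ?thesis using c1 c3 c4 top kk unfolding D_def by simp
qed

end
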